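(* Let $P$ be a Markov kernel on a finite set $\Omega$ (in the paper, a coordinate-replacement kernel restricted to its invariant set $\Omega$), let $G\subseteq\Omega$, and let $K_G(x,y)=P(x,y)\mathbf 1_{\{x,y\in G\}}$ for $x,y\in G$. For $x\in\Omega$ and integer $s\ge0$, let $\alpha^x_s=\delta_xP^s$, $\alpha^x_{s,G}(A)=\alpha^x_s(A\cap G)$, $\widetilde\alpha^x_{s,t}=\alpha^x_se^{t(P-I)}$ and $\lambda^x_{s,t}=\alpha^x_{s,G}e^{t(K_G-I)}$. Then for every integer $s\ge0$, integer $L\ge1$ and $t\ge0$, \[ \|\widetilde\alpha^x_{s,t}-\lambda^x_{s,t}\|_{\mathrm{TV}}\le\mathbb P_x(\exists\,u\in\{0,1,\dots,L\}:X_{s+u}\notin G)+\mathbb P(\operatorname{Poi}(t)>L), \] and the same right-hand side also bounds $1-\lambda^x_{s,t}(G)$.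
   Context: $(X_t)_{t\ge0}$ is the discrete-time chain with kernel $P$, with law $\mathbb P_x$ when started at $x$. $\operatorname{Poi}(t)$ is a Poisson random variable with mean $t$. $\lambda^x_{s,t}$ is a subprobability measure on $G$; the total variation distance between (sub)probability measures is $\|\nu-\lambda\|_{\mathrm{TV}}=\sup_A|\nu(A)-\lambda(A)|$. *)

theory Defs
  imports "HOL-Analysis.Analysis"
begin

text \<open>The finite state space Omega is the universe of a finite type 'a.
  (Sub)probability measures on Omega are represented by their point masses
  'a \<Rightarrow> real; kernels/matrices by 'a \<Rightarrow> 'a \<Rightarrow> real.\<close>

definition markov_kernel :: "('a::finite \<Rightarrow> 'a \<Rightarrow> real) \<Rightarrow> bool" where
  "markov_kernel P \<longleftrightarrow> (\<forall>x y. 0 \<le> P x y) \<and> (\<forall>x. (\<Sum>y\<in>UNIV. P x y) = 1)"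

definition vmul :: "('a::finite \<Rightarrow> real) \<Rightarrow> ('a \<Rightarrow> 'a \<Rightarrow> real) \<Rightarrow> ('a \<Rightarrow> real)" where
  "vmul mu M = (\<lambda>y. \<Sum>x\<in>UNIV. mu x * M x y)"

definition vmul_pow :: "('a::finite \<Rightarrow> real) \<Rightarrow> ('a \<Rightarrow> 'a \<Rightarrow> real) \<Rightarrow> nat \<Rightarrow> ('a \<Rightarrow> real)" where
  "vmul_pow mu M n = ((\<lambda>nu. vmul nu M) ^^ n) mu"

definition vmul_exp :: "('a::finite \<Rightarrow> real) \<Rightarrow> ('a \<Rightarrow> 'a \<Rightarrow> real) \<Rightarrow> ('a \<Rightarrow> real)" where
  "vmul_exp mu M = (\<lambda>y. \<Sum>n. vmul_pow mu M n y / fact n)"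

definition dirac :: "'a \<Rightarrow> 'a \<Rightarrow> real" where
  "dirac x = (\<lambda>y. if y = x then 1 else 0)"

definition meas :: "('a::finite \<Rightarrow> real) \<Rightarrow> 'a set \<Rightarrow> real" where
  "meas mu A = (\<Sum>y\<in>A. mu y)"

definition tv_dist :: "('a::finite \<Rightarrow> real) \<Rightarrow> ('a \<Rightarrow> real) \<Rightarrow> real" where
  "tv_dist nu la = (SUP A\<in>(UNIV :: 'a set set). \<bar>meas nu A - meas la A\<bar>)"

definition alpha :: "('a::finite \<Rightarrow> 'a \<Rightarrow> real) \<Rightarrow> 'a \<Rightarrow> nat \<Rightarrow> ('a \<Rightarrow> real)" where
  "alpha P x s = vmul_pow (dirac x) P s"

definition alphaG :: "('a::finite \<Rightarrow> 'a \<Rightarrow> real) \<Rightarrow> 'a set \<Rightarrow> 'a \<Rightarrow> nat \<Rightarrow> ('a \<Rightarrow> real)" where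
  "alphaG P G x s = (\<lambda>y. if y \<in> G then alpha P x s y else 0)"

text \<open>K_G(x,y) = P(x,y) 1_{x,y \<in> G}, a matrix indexed by G (extended by 0 outside G).\<close>
definition KG :: "('a \<Rightarrow> 'a \<Rightarrow> real) \<Rightarrow> 'a set \<Rightarrow> 'a \<Rightarrow> 'a \<Rightarrow> real" where
  "KG P G = (\<lambda>x y. if x \<in> G \<and> y \<in> G then P x y else 0)"

definition idG :: "'a set \<Rightarrow> 'a \<Rightarrow> 'a \<Rightarrow> real" where
  "idG G = (\<lambda>x y. if x \<in> G \<and> x = y then 1 else 0)"

definition alpha_tilde :: "('a::finite \<Rightarrow> 'a \<Rightarrow> real) \<Rightarrow> 'a \<Rightarrow> nat \<Rightarrow> real \<Rightarrow> ('a \<Rightarrow> real)" where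
  "alpha_tilde P x s t = vmul_exp (alpha P x s) (\<lambda>u v. t * (P u v - (if u = v then 1 else 0)))"

definition lam :: "('a::finite \<Rightarrow> 'a \<Rightarrow> real) \<Rightarrow> 'a set \<Rightarrow> 'a \<Rightarrow> nat \<Rightarrow> real \<Rightarrow> ('a \<Rightarrow> real)" where
  "lam P G x s t = vmul_exp (alphaG P G x s) (\<lambda>u v. t * (KG P G u v - idG G u v))"

text \<open>Law of the chain started at x: the probability that the path
  (X_0,...,X_n) = (x # xs) is prod_{i<n} P(X_i, X_{i+1}). The probability of an
  event E on paths of length n+1 started at x.\<close>
definition path_prob :: "('a::finite \<Rightarrow> 'a \<Rightarrow> real) \<Rightarrow> 'a \<Rightarrow> nat \<Rightarrow> ('a list \<Rightarrow> bool) \<Rightarrow> real" where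
  "path_prob P x n E = (\<Sum>xs\<in>{xs. length xs = n \<and> E (x # xs)}.
       \<Prod>i<n. P ((x # xs) ! i) ((x # xs) ! Suc i))"

definition poisson_tail :: "real \<Rightarrow> nat \<Rightarrow> real" where
  "poisson_tail t L = (\<Sum>k. if k > L then exp (- t) * t ^ k / fact k else 0)"

end

theory Submission
  imports Defs
begin


lemma binom_step:
  fixes f :: "nat \<Rightarrow> real" and a :: real
  shows "(\<Sum>j\<le>Suc n. real (Suc n choose j) * a^(Suc n - j) * f j)
       = (\<Sum>j\<le>n. real (n choose j) * a^(n - j) * (f (Suc j) + a * f j))"
proof -
  have "(\<Sum>j\<le>Suc n. real (Suc n choose j) * a^(Suc n - j) * f j)
     = a^(Suc n) * f 0 + (\<Sum>j\<le>n. real (Suc n choose Suc j) * a^(n - j) * f (Suc j))"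
    by (subst sum.atMost_Suc_shift) simp
  also have "\<dots> = a^(Suc n) * f 0 + (\<Sum>j\<le>n. real (n choose j) * a^(n - j) * f (Suc j))
        + (\<Sum>j\<le>n. real (n choose Suc j) * a^(n - j) * f (Suc j))"
    by (simp add: sum.distrib algebra_simps)
  also have "(\<Sum>j\<le>n. real (n choose Suc j) * a^(n - j) * f (Suc j))
      = (\<Sum>j\<le>Suc n. real (n choose j) * a^(Suc n - j) * f j) - a^(Suc n) * f 0"
    by (subst sum.atMost_Suc_shift) simp
  also have "(\<Sum>j\<le>Suc n. real (n choose j) * a^(Suc n - j) * f j)
      = (\<Sum>j\<le>n. real (n choose j) * a^(Suc n - j) * f j)"
    by simp
  also have "\<dots> = (\<Sum>j\<le>n. a * (real (n choose j) * a^(n - j) * f j))"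
    by (intro sum.cong refl) (simp add: Suc_diff_le)
  finally show ?thesis
    by (simp add: sum.distrib algebra_simps sum_distrib_left)
qed

lemma vmul_pow_0[simp]: "vmul_pow mu M 0 = mu"
  by (simp add: vmul_pow_def)

lemma vmul_pow_Suc: "vmul_pow mu M (Suc n) = vmul (vmul_pow mu M n) M"
  by (simp add: vmul_pow_def)

lemma vmul_sum:
  fixes f :: "nat \<Rightarrow> 'a::finite \<Rightarrow> real"
  shows "vmul (\<lambda>y. \<Sum>j\<in>S. c j * f j y) M = (\<lambda>y. \<Sum>j\<in>S. c j * vmul (f j) M y)"
  unfolding vmul_def
  by (auto simp: sum_distrib_left sum_distrib_right mult.assoc intro!: ext sum.swap)

lemma expand:
  fixes mu :: "'a::finite \<Rightarrow> real"
  assumes H: "\<And>n. vmul (vmul_pow mu Q n) I' = vmul_pow mu Q n"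
  shows "vmul_pow mu (\<lambda>u v. t * (Q u v - I' u v)) n y
     = (\<Sum>j\<le>n. real (n choose j) * (-t)^(n-j) * (t^j * vmul_pow mu Q j y))"
proof (induction n arbitrary: y)
  case 0
  then show ?case by simp
next
  case (Suc n)
  let ?M = "\<lambda>u v. t * (Q u v - I' u v)"
  let ?c = "\<lambda>j. real (n choose j) * (-t)^(n-j) * t^j"
  have IH: "vmul_pow mu ?M n = (\<lambda>y. \<Sum>j\<le>n. ?c j * vmul_pow mu Q j y)"
    using Suc.IH by (auto intro!: ext sum.cong simp: mult.assoc)
  have lin: "vmul nu ?M y = t * (vmul nu Q y - vmul nu I' y)" for nu
    unfolding vmul_def by (simp add: sum_distrib_left sum_subtractf algebra_simps)
  have "vmul_pow mu ?M (Suc n) y = t * (vmul (vmul_pow mu ?M n) Q y - vmul (vmul_pow mu ?M n) I' y)"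
    by (simp add: vmul_pow_Suc lin)
  also have "\<dots> = t * ((\<Sum>j\<le>n. ?c j * vmul_pow mu Q (Suc j) y) - (\<Sum>j\<le>n. ?c j * vmul_pow mu Q j y))"
    unfolding IH vmul_sum by (simp add: H vmul_pow_Suc[symmetric])
  also have "\<dots> = (\<Sum>j\<le>n. real (n choose j) * (-t)^(n-j) *
        (t^(Suc j) * vmul_pow mu Q (Suc j) y + (-t) * (t^j * vmul_pow mu Q j y)))"
    by (simp add: sum_distrib_left sum_subtractf[symmetric] algebra_simps)
  also have "\<dots> = (\<Sum>j\<le>Suc n. real (Suc n choose j) * (-t)^(Suc n-j) * (t^j * vmul_pow mu Q j y))"
    by (rule binom_step[symmetric])
  finally show ?case .
qed

lemma exp_identity:
  fixes mu :: "'a::finite \<Rightarrow> real"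
  assumes H: "\<And>n. vmul (vmul_pow mu Q n) I' = vmul_pow mu Q n"
    and B: "\<And>k. \<bar>vmul_pow mu Q k y\<bar> \<le> 1"
  shows "vmul_exp mu (\<lambda>u v. t * (Q u v - I' u v)) y
     = (\<Sum>k. t^k * vmul_pow mu Q k y / fact k) * exp (-t)"
proof -
  define a where "a = (\<lambda>i. t^i * vmul_pow mu Q i y / fact i)"
  define b where "b = (\<lambda>i. (-t)^i / fact i :: real)"
  have sa: "summable (\<lambda>k. norm (a k))"
  proof (rule summable_comparison_test'[of "\<lambda>k. \<bar>t\<bar>^k / fact k"])
    show "summable (\<lambda>k. \<bar>t\<bar>^k / fact k)"
      using summable_exp[of "\<bar>t\<bar>"] by (simp add: divide_inverse mult.commute)
    fix k
    show "norm (norm (a k)) \<le> \<bar>t\<bar>^k / fact k"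
    proof -
      have "\<bar>t\<bar>^k * \<bar>vmul_pow mu Q k y\<bar> \<le> \<bar>t\<bar>^k"
        using B[of k] by (intro mult_left_le) auto
      then show ?thesis unfolding a_def
        by (auto simp: abs_mult power_abs intro!: divide_right_mono)
    qed
  qed
  have sb: "summable (\<lambda>k. norm (b k))"
    unfolding b_def using summable_exp[of "\<bar>t\<bar>"]
    by (simp add: abs_mult power_abs divide_inverse mult.commute)
  have bsum: "(\<Sum>k. b k) = exp (-t)"
    using exp_converges[of "-t"] unfolding b_def
    by (simp add: sums_iff scaleR_conv_of_real divide_inverse mult.commute)
  have eq: "(\<Sum>i\<le>k. a i * b (k - i)) = vmul_pow mu (\<lambda>u v. t * (Q u v - I' u v)) k y / fact k" for k
  proof -
    have "vmul_pow mu (\<lambda>u v. t * (Q u v - I' u v)) k y / fact k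
        = (\<Sum>j\<le>k. real (k choose j) / fact k * (-t)^(k-j) * (t^j * vmul_pow mu Q j y))"
      by (simp add: expand[OF H] sum_divide_distrib)
    also have "\<dots> = (\<Sum>i\<le>k. a i * b (k - i))"
      unfolding a_def b_def
      by (intro sum.cong refl) (simp add: binomial_fact)
    finally show ?thesis by simp
  qed
  have "(\<lambda>k. vmul_pow mu (\<lambda>u v. t * (Q u v - I' u v)) k y / fact k) sums ((\<Sum>k. a k) * (\<Sum>k. b k))"
    using Cauchy_product_sums[OF sa sb] by (simp add: eq)
  then show ?thesis
    unfolding vmul_exp_def bsum a_def by (simp add: sums_iff)
qed




fun Fw :: "('a::finite \<Rightarrow> 'a \<Rightarrow> real) \<Rightarrow> (nat \<Rightarrow> 'a set) \<Rightarrow> 'a \<Rightarrow> nat \<Rightarrow> 'a \<Rightarrow> real" where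
  "Fw P C x 0 = (\<lambda>y. if y = x \<and> x \<in> C 0 then 1 else 0)"
| "Fw P C x (Suc n) = (\<lambda>y. if y \<in> C (Suc n) then vmul (Fw P C x n) P y else 0)"

lemma finite_len: "finite {xs :: ('a::finite) list. length xs = n \<and> Q xs}"
  by (rule finite_subset[OF _ finite_lists_length_eq[OF finite_class.finite_UNIV, of n]]) auto

lemma path_last:
  fixes P :: "'a::finite \<Rightarrow> 'a \<Rightarrow> real"
  shows "(\<Sum>xs\<in>{xs. length xs = n \<and> (\<forall>i\<le>n. (x#xs)!i \<in> C i) \<and> last (x#xs) = y}.
            \<Prod>i<n. P ((x#xs)!i) ((x#xs)!Suc i)) = Fw P C x n y"
proof (induction n arbitrary: y)
  case 0
  have "{xs. length xs = 0 \<and> (\<forall>i\<le>0. (x#xs)!i \<in> C i) \<and> last (x#xs) = y}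
       = (if y = x \<and> x \<in> C 0 then {[]} else {})"
    by auto
  then show ?case by simp
next
  case (Suc n)
  define T where "T = {ys. length ys = n \<and> (\<forall>i\<le>n. (x#ys)!i \<in> C i)}"
  define g where "g = (\<lambda>ys. \<Prod>i<n. P ((x#ys)!i) ((x#ys)!Suc i))"
  have fT: "finite T" unfolding T_def by (rule finite_len)
  show ?case
  proof (cases "y \<in> C (Suc n)")
    case False
    have E: "{xs. length xs = Suc n \<and> (\<forall>i\<le>Suc n. (x#xs)!i \<in> C i) \<and> last (x#xs) = y} = {}"
    proof (safe)
      fix xs assume "length xs = Suc n" "\<forall>i\<le>Suc n. (x#xs)!i \<in> C i" "y = last (x#xs)"
      then have "(x#xs)!Suc n \<in> C (Suc n)" "last (x#xs) = (x#xs)!Suc n"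
        by (auto simp: last_conv_nth)
      then show "xs \<in> {}" using False \<open>y = last (x#xs)\<close> by auto
    qed
    show ?thesis unfolding E using False by simp
  next
    case True
    have S: "{xs. length xs = Suc n \<and> (\<forall>i\<le>Suc n. (x#xs)!i \<in> C i) \<and> last (x#xs) = y}
        = (\<lambda>ys. ys @ [y]) ` T"
    proof (intro equalityI subsetI)
      fix xs assume "xs \<in> {xs. length xs = Suc n \<and> (\<forall>i\<le>Suc n. (x#xs)!i \<in> C i) \<and> last (x#xs) = y}"
      then have a: "length xs = Suc n" "\<forall>i\<le>Suc n. (x#xs)!i \<in> C i" "y = last (x#xs)" by auto
      then obtain ys z where xs: "xs = ys @ [z]"
        by (metis length_Suc_conv_rev)
      with a have "z = y" by simp
      moreover have "ys \<in> T"
        unfolding T_def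
      proof safe
        show "length ys = n" using a xs by simp
        fix i assume "i \<le> n"
        then have "(x#ys)!i = (x#xs)!i" using a xs
          by (cases i) (auto simp: nth_append)
        then show "(x#ys)!i \<in> C i" using a \<open>i \<le> n\<close> by auto
      qed
      ultimately show "xs \<in> (\<lambda>ys. ys @ [y]) ` T" using xs by auto
    next
      fix zs assume "zs \<in> (\<lambda>ys. ys @ [y]) ` T"
      then obtain ys where zs: "zs = ys @ [y]" and "ys \<in> T" by auto
      then have a: "length ys = n" "\<forall>i\<le>n. (x#ys)!i \<in> C i" unfolding T_def by auto
      have "(x # ys @ [y]) ! i \<in> C i" if "i \<le> Suc n" for i
      proof (cases "i = Suc n")
        case True
        then show ?thesis using a \<open>y \<in> C (Suc n)\<close> by (simp add: nth_append)
      next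
        case False
        then have "i \<le> n" using that by simp
        then have "(x # ys @ [y]) ! i = (x#ys)!i" using a
          by (cases i) (auto simp: nth_append)
        then show ?thesis using a \<open>i \<le> n\<close> by auto
      qed
      then show "zs \<in> {xs. length xs = Suc n \<and> (\<forall>i\<le>Suc n. (x#xs)!i \<in> C i) \<and> last (x#xs) = y}"
        using zs a by simp
    qed
    have prod: "(\<Prod>i<Suc n. P ((x#ys@[y])!i) ((x#ys@[y])!Suc i))
        = g ys * P (last (x#ys)) y" if "ys \<in> T" for ys
    proof -
      have len: "length ys = n" using that unfolding T_def by auto
      have "(\<Prod>i<n. P ((x#ys@[y])!i) ((x#ys@[y])!Suc i)) = g ys"
        unfolding g_def
      proof (intro prod.cong refl)
        fix i assume "i \<in> {..<n}"
        then have "i < n" by simp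
        then show "P ((x#ys@[y])!i) ((x#ys@[y])!Suc i) = P ((x#ys)!i) ((x#ys)!Suc i)"
          using len by (cases i) (auto simp: nth_append)
      qed
      moreover have "(x#ys@[y])!n = last (x#ys)" "(x#ys@[y])!Suc n = y"
        using len by (auto simp: nth_append last_conv_nth)
      ultimately show ?thesis by simp
    qed
    have "(\<Sum>xs\<in>{xs. length xs = Suc n \<and> (\<forall>i\<le>Suc n. (x#xs)!i \<in> C i) \<and> last (x#xs) = y}.
            \<Prod>i<Suc n. P ((x#xs)!i) ((x#xs)!Suc i))
        = (\<Sum>ys\<in>T. \<Prod>i<Suc n. P ((x#ys@[y])!i) ((x#ys@[y])!Suc i))"
      unfolding S by (subst sum.reindex) (auto simp: inj_on_def)
    also have "\<dots> = (\<Sum>ys\<in>T. g ys * P (last (x#ys)) y)"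
      by (intro sum.cong refl prod)
    also have "\<dots> = (\<Sum>u\<in>UNIV. \<Sum>ys\<in>{ys. ys \<in> T \<and> last (x#ys) = u}. g ys * P (last (x#ys)) y)"
      by (rule sum.group[symmetric]) (auto simp: fT)
    also have "\<dots> = (\<Sum>u\<in>UNIV. Fw P C x n u * P u y)"
    proof (intro sum.cong refl)
      fix u
      have d: "(\<Sum>ys\<in>{ys. ys \<in> T \<and> last (x#ys) = u}. g ys * P (last (x#ys)) y)
          = (\<Sum>ys\<in>{ys. ys \<in> T \<and> last (x#ys) = u}. g ys) * P u y"
        by (simp add: sum_distrib_right)
      have eqS: "{ys. ys \<in> T \<and> last (x#ys) = u} = {xs. length xs = n \<and> (\<forall>i\<le>n. (x#xs)!i \<in> C i) \<and> last (x#xs) = u}"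
        unfolding T_def by auto
      show "(\<Sum>ys\<in>{ys. ys \<in> T \<and> last (x#ys) = u}. g ys * P (last (x#ys)) y) = Fw P C x n u * P u y"
        using d unfolding eqS g_def Suc.IH .
    qed
    finally show ?thesis using True by (simp add: vmul_def)
  qed
qed

lemma path_prob_Fw:
  fixes P :: "'a::finite \<Rightarrow> 'a \<Rightarrow> real"
  shows "path_prob P x n (\<lambda>w. \<forall>i\<le>n. w!i \<in> C i) = (\<Sum>y\<in>UNIV. Fw P C x n y)"
proof -
  have "path_prob P x n (\<lambda>w. \<forall>i\<le>n. w!i \<in> C i)
     = (\<Sum>y\<in>UNIV. \<Sum>xs\<in>{xs. xs \<in> {xs. length xs = n \<and> (\<forall>i\<le>n. (x#xs)!i \<in> C i)} \<and> last (x#xs) = y}.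
            \<Prod>i<n. P ((x#xs)!i) ((x#xs)!Suc i))"
    unfolding path_prob_def by (rule sum.group[symmetric]) (auto simp: finite_len)
  also have "\<dots> = (\<Sum>y\<in>UNIV. Fw P C x n y)"
    by (intro sum.cong refl) (simp add: path_last[symmetric])
  finally show ?thesis .
qed

lemma path_prob_compl:
  "path_prob P x n E = path_prob P x n (\<lambda>_. True) - path_prob P x n (\<lambda>w. \<not> E w)"
proof -
  have "{xs. length xs = n \<and> True} = {xs. length xs = n \<and> E (x#xs)} \<union> {xs. length xs = n \<and> \<not> E (x#xs)}"
    by auto
  then have "path_prob P x n (\<lambda>_. True) = path_prob P x n E + path_prob P x n (\<lambda>w. \<not> E w)"
    unfolding path_prob_def by (simp add: sum.union_disjoint finite_len Collect_conj_eq[symmetric])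
  then show ?thesis by simp
qed




lemma summ_gen:
  fixes c :: "nat \<Rightarrow> real"
  assumes "\<And>k. \<bar>c k\<bar> \<le> 1"
  shows "summable (\<lambda>k. t^k * c k / fact k)"
proof (rule summable_comparison_test'[of "\<lambda>k. \<bar>t\<bar>^k / fact k"])
  show "summable (\<lambda>k. \<bar>t\<bar>^k / fact k)"
    using summable_exp[of "\<bar>t\<bar>"] by (simp add: divide_inverse mult.commute)
  fix k
  have "\<bar>t\<bar>^k * \<bar>c k\<bar> \<le> \<bar>t\<bar>^k"
    using assms[of k] by (intro mult_left_le) auto
  then show "norm (t^k * c k / fact k) \<le> \<bar>t\<bar>^k / fact k"
    by (auto simp: abs_mult power_abs intro!: divide_right_mono)
qed

lemma summ_p:
  fixes c :: "nat \<Rightarrow> real"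
  assumes "\<And>k. \<bar>c k\<bar> \<le> 1"
  shows "summable (\<lambda>k. exp (-t) * t^k / fact k * c k)"
proof -
  have "summable (\<lambda>k. exp (-t) * (t^k * c k / fact k))"
    by (intro summable_mult summ_gen assms)
  then show ?thesis by (simp add: algebra_simps)
qed

lemma sum_p: "(\<Sum>k. exp (-t) * t^k / fact k) = (1::real)"
proof -
  have "(\<lambda>k. t^k / fact k) sums exp t"
    using exp_converges[of t] by (simp add: real_scaleR_def divide_inverse mult.commute)
  then have "(\<lambda>k. exp (-t) * (t^k / fact k)) sums (exp (-t) * exp t)"
    by (rule sums_mult)
  then show ?thesis by (simp add: sums_iff exp_minus_inverse mult.commute)
qed

lemma pow_stoch:
  fixes P :: "'a::finite \<Rightarrow> 'a \<Rightarrow> real"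
  assumes P: "markov_kernel P" and mu: "\<And>y. 0 \<le> mu y"
  shows "(\<forall>y. 0 \<le> vmul_pow mu P k y) \<and> (\<Sum>y\<in>UNIV. vmul_pow mu P k y) = (\<Sum>y\<in>UNIV. mu y)"
proof (induction k)
  case 0
  then show ?case using mu by simp
next
  case (Suc k)
  let ?V = "vmul_pow mu P k"
  have Pn: "0 \<le> P u v" for u v using P unfolding markov_kernel_def by blast
  have P1: "(\<Sum>y\<in>UNIV. P u y) = 1" for u using P unfolding markov_kernel_def by blast
  have "0 \<le> vmul ?V P y" for y
    unfolding vmul_def using Suc.IH Pn by (intro sum_nonneg mult_nonneg_nonneg) blast+
  moreover have "(\<Sum>y\<in>UNIV. vmul ?V P y) = (\<Sum>u\<in>UNIV. \<Sum>y\<in>UNIV. ?V u * P u y)"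
    unfolding vmul_def by (rule sum.swap)
  moreover have "\<dots> = (\<Sum>u\<in>UNIV. ?V u)"
    by (simp only: sum_distrib_left[symmetric] P1 mult_1_right)
  ultimately show ?case using Suc.IH by (simp only: vmul_pow_Suc) simp
qed

lemma alpha_stoch:
  fixes P :: "'a::finite \<Rightarrow> 'a \<Rightarrow> real"
  assumes P: "markov_kernel P"
  shows "0 \<le> alpha P x s y" "(\<Sum>y\<in>UNIV. alpha P x s y) = 1"
  using pow_stoch[OF P, of "dirac x" s] by (auto simp: alpha_def dirac_def)

lemma Fw_pre:
  fixes P :: "'a::finite \<Rightarrow> 'a \<Rightarrow> real"
  assumes "n < s"
  shows "Fw P (\<lambda>i. {y. s \<le> i \<longrightarrow> y \<in> G}) x n = alpha P x n"
  using assms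
proof (induction n)
  case 0
  then show ?case by (auto simp: alpha_def dirac_def)
next
  case (Suc n)
  then show ?case by (auto simp: alpha_def vmul_pow_Suc intro!: ext)
qed

lemma Fw_s:
  fixes P :: "'a::finite \<Rightarrow> 'a \<Rightarrow> real"
  shows "Fw P (\<lambda>i. {y. s \<le> i \<longrightarrow> y \<in> G}) x s = alphaG P G x s"
proof (cases s)
  case 0
  then show ?thesis by (auto simp: alphaG_def alpha_def dirac_def intro!: ext)
next
  case (Suc m)
  then have "Fw P (\<lambda>i. {y. s \<le> i \<longrightarrow> y \<in> G}) x m = alpha P x m"
    by (intro Fw_pre) auto
  then show ?thesis using Suc
    by (auto simp: alphaG_def alpha_def vmul_pow_Suc intro!: ext)
qed

lemma E_supp:
  fixes P :: "'a::finite \<Rightarrow> 'a \<Rightarrow> real"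
  shows "y \<notin> G \<Longrightarrow> vmul_pow (alphaG P G x s) (KG P G) k y = 0"
  by (cases k) (auto simp: alphaG_def vmul_pow_Suc vmul_def KG_def)

lemma Fw_E:
  fixes P :: "'a::finite \<Rightarrow> 'a \<Rightarrow> real"
  shows "Fw P (\<lambda>i. {y. s \<le> i \<longrightarrow> y \<in> G}) x (s + k) = vmul_pow (alphaG P G x s) (KG P G) k"
proof (induction k)
  case 0
  then show ?case using Fw_s by simp
next
  case (Suc k)
  show ?case
  proof (rule ext)
    fix y
    have "vmul (vmul_pow (alphaG P G x s) (KG P G) k) (KG P G) y
       = (if y \<in> G then vmul (vmul_pow (alphaG P G x s) (KG P G) k) P y else 0)"
    proof (cases "y \<in> G")
      case True
      have "vmul_pow (alphaG P G x s) (KG P G) k u * KG P G u y = vmul_pow (alphaG P G x s) (KG P G) k u * P u y" for u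
      proof (cases "u \<in> G")
        case True
        then show ?thesis using \<open>y \<in> G\<close> by (simp add: KG_def)
      next
        case False
        then show ?thesis by (simp add: E_supp)
      qed
      then have "vmul (vmul_pow (alphaG P G x s) (KG P G) k) (KG P G) y = vmul (vmul_pow (alphaG P G x s) (KG P G) k) P y"
        unfolding vmul_def by (intro sum.cong refl)
      then show ?thesis using True by simp
    next
      case False
      then show ?thesis unfolding vmul_def KG_def by simp
    qed
    then show "Fw P (\<lambda>i. {y. s \<le> i \<longrightarrow> y \<in> G}) x (s + Suc k) y = vmul_pow (alphaG P G x s) (KG P G) (Suc k) y"
      using Suc by (simp add: vmul_pow_Suc)
  qed
qed

lemma E_props:
  fixes P :: "'a::finite \<Rightarrow> 'a \<Rightarrow> real"
  assumes P: "markov_kernel P"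
  shows "0 \<le> vmul_pow (alphaG P G x s) (KG P G) k y \<and>
         vmul_pow (alphaG P G x s) (KG P G) k y \<le> vmul_pow (alpha P x s) P k y"
proof (induction k arbitrary: y)
  case 0
  then show ?case using alpha_stoch(1)[OF P, of x s y] by (simp add: alphaG_def)
next
  case (Suc k)
  have Pn: "0 \<le> P u v" for u v using P unfolding markov_kernel_def by blast
  have Kn: "0 \<le> KG P G u v" "KG P G u v \<le> P u v" for u v using Pn[of u v] by (auto simp: KG_def)
  have "0 \<le> vmul (vmul_pow (alphaG P G x s) (KG P G) k) (KG P G) y"
    unfolding vmul_def using Suc Kn by (intro sum_nonneg mult_nonneg_nonneg) auto
  moreover have "vmul (vmul_pow (alphaG P G x s) (KG P G) k) (KG P G) y \<le> vmul (vmul_pow (alpha P x s) P k) P y"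
    unfolding vmul_def
  proof (intro sum_mono)
    fix u
    show "vmul_pow (alphaG P G x s) (KG P G) k u * KG P G u y
        \<le> vmul_pow (alpha P x s) P k u * P u y"
      using Suc[of u] Kn[of u y] by (auto intro: mult_mono)
  qed
  ultimately show ?case by (simp add: vmul_pow_Suc)
qed

lemma E_mass_mono:
  fixes P :: "'a::finite \<Rightarrow> 'a \<Rightarrow> real"
  assumes P: "markov_kernel P"
  shows "(\<Sum>y\<in>UNIV. vmul_pow (alphaG P G x s) (KG P G) (Suc k) y) \<le> (\<Sum>y\<in>UNIV. vmul_pow (alphaG P G x s) (KG P G) k y)"
proof -
  let ?E = "vmul_pow (alphaG P G x s) (KG P G) k"
  have Pn: "0 \<le> P u v" for u v using P unfolding markov_kernel_def by blast
  have "(\<Sum>y\<in>UNIV. vmul ?E (KG P G) y) = (\<Sum>u\<in>UNIV. \<Sum>y\<in>UNIV. ?E u * KG P G u y)"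
    unfolding vmul_def by (rule sum.swap)
  also have "\<dots> = (\<Sum>u\<in>UNIV. ?E u * (\<Sum>y\<in>UNIV. KG P G u y))"
    by (simp only: sum_distrib_left)
  also have "\<dots> \<le> (\<Sum>u\<in>UNIV. ?E u * 1)"
  proof (intro sum_mono mult_left_mono)
    fix u
    show "0 \<le> ?E u" using E_props[OF P] by blast
    have "(\<Sum>y\<in>UNIV. KG P G u y) \<le> (\<Sum>y\<in>UNIV. P u y)"
      unfolding KG_def using Pn by (intro sum_mono) auto
    then show "(\<Sum>y\<in>UNIV. KG P G u y) \<le> 1" using P unfolding markov_kernel_def by simp
  qed
  finally show ?thesis by (simp add: vmul_pow_Suc)
qed




theorem lemma2p6:
  fixes P :: "'a::finite \<Rightarrow> 'a \<Rightarrow> real" and G :: "'a set" and x :: 'a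
    and s L :: nat and t :: real
  assumes "markov_kernel P" and "1 \<le> L" and "0 \<le> t"
  shows "tv_dist (alpha_tilde P x s t) (lam P G x s t)
           \<le> path_prob P x (s + L) (\<lambda>w. \<exists>u\<in>{0..L}. w ! (s + u) \<notin> G) + poisson_tail t L
         \<and> 1 - meas (lam P G x s t) G
           \<le> path_prob P x (s + L) (\<lambda>w. \<exists>u\<in>{0..L}. w ! (s + u) \<notin> G) + poisson_tail t L"
proof -
  note P = assms(1)
  define D where "D = (\<lambda>k. vmul_pow (alpha P x s) P k)"
  define E where "E = (\<lambda>k. vmul_pow (alphaG P G x s) (KG P G) k)"
  define p where "p = (\<lambda>k::nat. exp (-t) * t^k / fact k)"
  define mE where "mE = (\<lambda>k. \<Sum>y\<in>UNIV. E k y)"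
  define ex where "ex = path_prob P x (s+L) (\<lambda>w. \<exists>u\<in>{0..L}. w!(s+u) \<notin> G)"
  define atl where "atl = alpha_tilde P x s t"
  define la where "la = lam P G x s t"
  have Dn: "0 \<le> D k y" and Dsum: "(\<Sum>y\<in>UNIV. D k y) = 1" for k y
    using pow_stoch[OF P, of "alpha P x s" k] alpha_stoch[OF P, of x s] unfolding D_def by auto
  have D1: "D k y \<le> 1" for k y
  proof -
    have "D k y \<le> (\<Sum>y\<in>UNIV. D k y)"
      by (rule member_le_sum) (auto simp: Dn)
    then show ?thesis using Dsum by simp
  qed
  have En: "0 \<le> E k y" and ED: "E k y \<le> D k y" for k y
    using E_props[OF P, of G x s k y] unfolding E_def D_def by auto
  have E1: "E k y \<le> 1" for k y using ED[of k y] D1[of k y] by simp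
  have Esupp: "y \<notin> G \<Longrightarrow> E k y = 0" for k y
    unfolding E_def by (rule E_supp)
  have mE_step: "mE (Suc k) \<le> mE k" for k
    unfolding mE_def E_def by (rule E_mass_mono[OF P])
  have mE_mono: "k \<le> L \<Longrightarrow> mE L \<le> mE k" for k
    by (rule lift_Suc_antimono_le[of mE, OF mE_step])
  have mE0: "0 \<le> mE k" for k unfolding mE_def by (intro sum_nonneg) (simp add: En)
  have mE1: "mE k \<le> 1" for k
  proof -
    have "mE k \<le> (\<Sum>y\<in>UNIV. D k y)" unfolding mE_def by (intro sum_mono ED)
    then show ?thesis using Dsum by simp
  qed
  have p0: "0 \<le> p k" for k unfolding p_def using assms(3) by simp
  have psum: "(\<Sum>k. p k) = 1" unfolding p_def by (rule sum_p)
  have psumm: "summable p"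
    using summ_p[of "\<lambda>_. 1" t] unfolding p_def by simp
  have ex_eq: "ex = 1 - mE L"
  proof -
    have tot: "path_prob P x (s+L) (\<lambda>_. True) = 1"
    proof -
      have "(\<lambda>_. True) = (\<lambda>w::'a list. \<forall>i\<le>s+L. w!i \<in> {y. Suc (s+L) \<le> i \<longrightarrow> y \<in> UNIV})"
        by auto
      then have "path_prob P x (s+L) (\<lambda>_. True) = (\<Sum>y\<in>UNIV. Fw P (\<lambda>i. {y. Suc (s+L) \<le> i \<longrightarrow> y \<in> UNIV}) x (s+L) y)"
        by (simp only: path_prob_Fw)
      also have "\<dots> = (\<Sum>y\<in>UNIV. alpha P x (s+L) y)"
        by (simp only: Fw_pre[of "s+L" "Suc (s+L)"] lessI)
      finally show ?thesis using alpha_stoch(2)[OF P] by simp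
    qed
    have st: "(\<lambda>w. \<not> (\<exists>u\<in>{0..L}. w!(s+u) \<notin> G)) = (\<lambda>w. \<forall>i\<le>s+L. w!i \<in> {y. s \<le> i \<longrightarrow> y \<in> G})"
    proof (intro ext iffI)
      fix w :: "'a list"
      assume a: "\<not> (\<exists>u\<in>{0..L}. w!(s+u) \<notin> G)"
      show "\<forall>i\<le>s+L. w!i \<in> {y. s \<le> i \<longrightarrow> y \<in> G}"
      proof (intro allI impI)
        fix i assume "i \<le> s + L"
        show "w!i \<in> {y. s \<le> i \<longrightarrow> y \<in> G}"
        proof (cases "s \<le> i")
          case True
          then have "i - s \<in> {0..L}" "s + (i - s) = i" using \<open>i \<le> s + L\<close> by auto
          then show ?thesis using a by force
        qed simp
      qed
    next
      fix w :: "'a list"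
      assume "\<forall>i\<le>s+L. w!i \<in> {y. s \<le> i \<longrightarrow> y \<in> G}"
      then show "\<not> (\<exists>u\<in>{0..L}. w!(s+u) \<notin> G)" by auto
    qed
    have "path_prob P x (s+L) (\<lambda>w. \<not> (\<exists>u\<in>{0..L}. w!(s+u) \<notin> G)) = mE L"
      unfolding st path_prob_Fw Fw_E mE_def E_def by simp
    then show ?thesis unfolding ex_def using tot
      by (subst path_prob_compl) simp
  qed
  have ex0: "0 \<le> ex" using ex_eq mE1[of L] by simp
  have atl_eq: "atl y = (\<Sum>k. p k * D k y)" for y
  proof -
    have H: "vmul (vmul_pow (alpha P x s) P n) (\<lambda>u v. if u = v then 1 else 0) = vmul_pow (alpha P x s) P n" for n
      unfolding vmul_def by (auto intro!: ext simp: if_distrib cong: if_cong)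
    have B: "\<bar>vmul_pow (alpha P x s) P k y\<bar> \<le> 1" for k
      using Dn[of k y] D1[of k y] unfolding D_def by simp
    have "atl y = (\<Sum>k. t^k * D k y / fact k) * exp (-t)"
      unfolding atl_def alpha_tilde_def D_def
      using exp_identity[of "alpha P x s" P "\<lambda>u v. if u = v then 1 else 0" y t, OF H B] by simp
    also have "\<dots> = (\<Sum>k. t^k * D k y / fact k * exp (-t))"
      by (rule suminf_mult2) (rule summ_gen, use Dn D1 in auto)
    also have "\<dots> = (\<Sum>k. p k * D k y)"
      unfolding p_def by (simp add: algebra_simps)
    finally show ?thesis .
  qed
  have la_eq: "la y = (\<Sum>k. p k * E k y)" for y
  proof -
    have H: "vmul (vmul_pow (alphaG P G x s) (KG P G) n) (idG G) = vmul_pow (alphaG P G x s) (KG P G) n" for n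
    proof (rule ext)
      fix z
      show "vmul (vmul_pow (alphaG P G x s) (KG P G) n) (idG G) z = vmul_pow (alphaG P G x s) (KG P G) n z"
      proof (cases "z \<in> G")
        case True
        have "vmul (vmul_pow (alphaG P G x s) (KG P G) n) (idG G) z
            = (\<Sum>u\<in>UNIV. if u = z then vmul_pow (alphaG P G x s) (KG P G) n u else 0)"
          unfolding vmul_def idG_def using True by (intro sum.cong refl) auto
        then show ?thesis by simp
      next
        case False
        then show ?thesis using Esupp[of z n] unfolding vmul_def idG_def E_def
          by (auto simp: if_distrib cong: if_cong)
      qed
    qed
    have B: "\<bar>vmul_pow (alphaG P G x s) (KG P G) k y\<bar> \<le> 1" for k
      using En[of k y] ED[of k y] D1[of k y] unfolding E_def by simp
    have "la y = (\<Sum>k. t^k * E k y / fact k) * exp (-t)"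
      unfolding la_def lam_def E_def
      using exp_identity[of "alphaG P G x s" "KG P G" "idG G" y t, OF H B] by simp
    also have "\<dots> = (\<Sum>k. t^k * E k y / fact k * exp (-t))"
      by (rule suminf_mult2) (rule summ_gen, use En E1 in auto)
    also have "\<dots> = (\<Sum>k. p k * E k y)"
      unfolding p_def by (simp add: algebra_simps)
    finally show ?thesis .
  qed
  have sD: "summable (\<lambda>k. p k * D k y)" for y
    using summ_p[of "\<lambda>k. D k y" t] Dn D1 unfolding p_def by auto
  have sE: "summable (\<lambda>k. p k * E k y)" for y
    using summ_p[of "\<lambda>k. E k y" t] En E1 unfolding p_def by auto
  have sDE: "summable (\<lambda>k. p k * (D k y - E k y))" for y
    using summable_diff[OF sD sE, of y y] by (simp add: algebra_simps)
  have diff: "atl y - la y = (\<Sum>k. p k * (D k y - E k y))" for y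
    unfolding atl_eq la_eq using suminf_diff[OF sD sE, of y y] by (simp add: algebra_simps)
  have diff0: "0 \<le> atl y - la y" for y
    unfolding diff by (intro suminf_nonneg sDE mult_nonneg_nonneg p0) (simp add: ED)
  have tot: "(\<Sum>y\<in>UNIV. atl y - la y) = (\<Sum>k. p k * (1 - mE k))"
  proof -
    have "(\<Sum>y\<in>UNIV. atl y - la y) = (\<Sum>y\<in>UNIV. \<Sum>k. p k * (D k y - E k y))"
      by (simp only: diff)
    also have "\<dots> = (\<Sum>k. \<Sum>y\<in>UNIV. p k * (D k y - E k y))"
      by (rule suminf_sum[symmetric]) (rule sDE)
    also have "\<dots> = (\<Sum>k. p k * (1 - mE k))"
      by (simp add: sum_distrib_left[symmetric] sum_subtractf Dsum mE_def)
    finally show ?thesis .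
  qed
  have bound: "(\<Sum>k. p k * (1 - mE k)) \<le> ex + poisson_tail t L"
  proof -
    have pt: "poisson_tail t L = (\<Sum>k. if L < k then p k else 0)"
      unfolding poisson_tail_def p_def by simp
    have s1: "summable (\<lambda>k. p k * (1 - mE k))"
      using summ_p[of "\<lambda>k. 1 - mE k" t] mE0 mE1 unfolding p_def by (simp add: abs_le_iff)
    have s2: "summable (\<lambda>k. if L < k then p k else 0)"
      using summ_p[of "\<lambda>k. if L < k then 1 else 0" t] unfolding p_def
      by (simp add: if_distrib cong: if_cong)
    have s3: "summable (\<lambda>k. p k * ex)"
      by (rule summable_mult2[OF psumm])
    have "(\<Sum>k. p k * (1 - mE k)) \<le> (\<Sum>k. p k * ex + (if L < k then p k else 0))"
    proof (rule suminf_le)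
      fix k
      show "p k * (1 - mE k) \<le> p k * ex + (if L < k then p k else 0)"
      proof (cases "L < k")
        case True
        have "p k * (1 - mE k) \<le> p k * 1"
          using mE0[of k] p0[of k] by (intro mult_left_mono) auto
        moreover have "0 \<le> p k * ex" using p0[of k] ex0 by simp
        ultimately show ?thesis using True by simp
      next
        case False
        have "p k * (1 - mE k) \<le> p k * ex"
          using mE_mono[of k] False p0[of k] ex_eq by (intro mult_left_mono) auto
        then show ?thesis using False by simp
      qed
    qed (use s1 summable_add[OF s3 s2] in auto)
    also have "\<dots> = (\<Sum>k. p k * ex) + (\<Sum>k. if L < k then p k else 0)"
      by (rule suminf_add[OF s3 s2, symmetric])
    also have "(\<Sum>k. p k * ex) = ex"
      using suminf_mult2[OF psumm, of ex] psum by simp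
    finally show ?thesis using pt by simp
  qed
  have tv: "tv_dist atl la \<le> ex + poisson_tail t L"
    unfolding tv_dist_def
  proof (rule cSUP_least)
    fix A :: "'a set"
    assume "A \<in> UNIV"
    have "meas atl A - meas la A = (\<Sum>y\<in>A. atl y - la y)"
      unfolding meas_def by (simp add: sum_subtractf)
    moreover have "0 \<le> (\<Sum>y\<in>A. atl y - la y)" by (intro sum_nonneg diff0)
    moreover have "(\<Sum>y\<in>A. atl y - la y) \<le> (\<Sum>y\<in>UNIV. atl y - la y)"
      using diff0 by (intro sum_mono2) auto
    ultimately show "\<bar>meas atl A - meas la A\<bar> \<le> ex + poisson_tail t L"
      using tot bound by simp
  qed simp
  have mass: "1 - meas la G \<le> ex + poisson_tail t L"
  proof -
    have la0: "y \<notin> G \<Longrightarrow> la y = 0" for y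
      unfolding la_eq by (simp add: Esupp)
    have "meas la G = (\<Sum>y\<in>UNIV. la y)"
      unfolding meas_def by (rule sum.mono_neutral_left) (auto simp: la0)
    moreover have "(\<Sum>y\<in>UNIV. atl y) = 1"
    proof -
      have "(\<Sum>y\<in>UNIV. atl y) = (\<Sum>k. \<Sum>y\<in>UNIV. p k * D k y)"
        unfolding atl_eq by (rule suminf_sum[symmetric]) (rule sD)
      also have "\<dots> = (\<Sum>k. p k)"
        by (simp add: sum_distrib_left[symmetric] Dsum)
      finally show ?thesis using psum by simp
    qed
    ultimately have "1 - meas la G = (\<Sum>y\<in>UNIV. atl y - la y)"
      by (simp add: sum_subtractf)
    then show ?thesis using tot bound by simp
  qed
  show ?thesis using tv mass unfolding atl_def la_def ex_def by simp
qed


end
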